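(* Let $G$ be a graph with no induced subgraph isomorphic to $C_4$. Then a clique of $G$ is strong if and only if it is simplicial.
   Context: A clique is strong if it intersects every maximal independent set. A clique $C$ of $G$ is simplicial if there is a vertex $v\in V(G)$ with $C=N[v]$, the closed neighborhood of $v$. *)

theory Defs
  imports Main
begin

definition graph :: "'a set \<Rightarrow> ('a \<Rightarrow> 'a \<Rightarrow> bool) \<Rightarrow> bool" where
  "graph V E \<longleftrightarrow> finite V \<and> (\<forall>x y. E x y \<longrightarrow> x \<in> V \<and> y \<in> V)
     \<and> (\<forall>x y. E x y \<longrightarrow> E y x) \<and> (\<forall>x. \<not> E x x)"

definition clique :: "'a set \<Rightarrow> ('a \<Rightarrow> 'a \<Rightarrow> bool) \<Rightarrow> 'a set \<Rightarrow> bool" where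
  "clique V E C \<longleftrightarrow> C \<subseteq> V \<and> (\<forall>x\<in>C. \<forall>y\<in>C. x \<noteq> y \<longrightarrow> E x y)"

definition independent :: "'a set \<Rightarrow> ('a \<Rightarrow> 'a \<Rightarrow> bool) \<Rightarrow> 'a set \<Rightarrow> bool" where
  "independent V E S \<longleftrightarrow> S \<subseteq> V \<and> (\<forall>x\<in>S. \<forall>y\<in>S. \<not> E x y)"

definition maximal_independent :: "'a set \<Rightarrow> ('a \<Rightarrow> 'a \<Rightarrow> bool) \<Rightarrow> 'a set \<Rightarrow> bool" where
  "maximal_independent V E S \<longleftrightarrow> independent V E S \<and>
     (\<forall>T. independent V E T \<and> S \<subseteq> T \<longrightarrow> T = S)"

definition strong_clique :: "'a set \<Rightarrow> ('a \<Rightarrow> 'a \<Rightarrow> bool) \<Rightarrow> 'a set \<Rightarrow> bool" where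
  "strong_clique V E C \<longleftrightarrow> clique V E C \<and>
     (\<forall>S. maximal_independent V E S \<longrightarrow> C \<inter> S \<noteq> {})"

definition closed_nbhd :: "'a set \<Rightarrow> ('a \<Rightarrow> 'a \<Rightarrow> bool) \<Rightarrow> 'a \<Rightarrow> 'a set" where
  "closed_nbhd V E v = {u\<in>V. E v u} \<union> {v}"

definition simplicial_clique :: "'a set \<Rightarrow> ('a \<Rightarrow> 'a \<Rightarrow> bool) \<Rightarrow> 'a set \<Rightarrow> bool" where
  "simplicial_clique V E C \<longleftrightarrow> clique V E C \<and> (\<exists>v\<in>V. C = closed_nbhd V E v)"

definition C4_free :: "'a set \<Rightarrow> ('a \<Rightarrow> 'a \<Rightarrow> bool) \<Rightarrow> bool" where
  "C4_free V E \<longleftrightarrow> \<not> (\<exists>a\<in>V. \<exists>b\<in>V. \<exists>c\<in>V. \<exists>d\<in>V. distinct [a,b,c,d] \<and>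
      E a b \<and> E b c \<and> E c d \<and> E d a \<and> \<not> E a c \<and> \<not> E b d)"

end

theory Submission
  imports Defs
begin

lemma ext_max:
  assumes g: "graph V E" and ind: "independent V E S"
  shows "\<exists>T. maximal_independent V E T \<and> S \<subseteq> T"
proof -
  let ?F = "{T. independent V E T \<and> S \<subseteq> T}"
  have "?F \<subseteq> Pow V" by (auto simp: independent_def)
  moreover have "finite V" using g by (simp add: graph_def)
  ultimately have fin: "finite ?F" by (meson finite_Pow_iff finite_subset)
  have ne: "?F \<noteq> {}" using ind by auto
  obtain T where T: "T \<in> ?F" and mx: "\<forall>b\<in>?F. T \<le> b \<longrightarrow> T = b"
    using finite_has_maximal[OF fin ne] by blast
  have "maximal_independent V E T"
    unfolding maximal_independent_def
  proof (intro conjI allI impI)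
    show "independent V E T" using T by simp
    fix T' assume "independent V E T' \<and> T \<subseteq> T'"
    then show "T' = T" using mx T by auto
  qed
  then show ?thesis using T by auto
qed

lemma dom:
  assumes g: "graph V E" and c4: "C4_free V E" and cl: "clique V E C"
    and out: "\<forall>v\<in>C. \<exists>u\<in>V-C. E v u"
  shows "D \<subseteq> C \<Longrightarrow> \<exists>S. S \<subseteq> V-C \<and> (\<forall>x\<in>S. \<forall>y\<in>S. \<not>E x y)
     \<and> (\<forall>w\<in>S. \<exists>d\<in>D. E w d) \<and> (\<forall>d\<in>D. \<exists>w\<in>S. E d w)"
proof (induction "card D" arbitrary: D rule: less_induct)
  case less
  have finV: "finite V" using g by (simp add: graph_def)
  have CV: "C \<subseteq> V" using cl by (simp add: clique_def)
  have finD: "finite D" by (rule finite_subset[OF _ finV]) (use less.prems CV in blast)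
  have sym: "\<And>x y. E x y \<Longrightarrow> E y x" and irr: "\<And>x. \<not> E x x"
    and inV: "\<And>x y. E x y \<Longrightarrow> x \<in> V \<and> y \<in> V" using g by (auto simp: graph_def)
  show ?case
  proof (cases "D = {}")
    case True then show ?thesis by (rule_tac x="{}" in exI) auto
  next
    case False
    then obtain d0 where d0: "d0 \<in> D" by auto
    define A where "A = {u\<in>V-C. {d\<in>D. E u d} \<noteq> {}}"
    define f where "f u = card {d\<in>D. E u d}" for u
    have finA: "finite A" unfolding A_def by (rule finite_subset[OF _ finV]) blast
    obtain u0 where "u0 \<in> V-C" "E d0 u0" using out d0 less.prems by blast
    hence "u0 \<in> A" using d0 sym unfolding A_def by auto
    hence neA: "A \<noteq> {}" by auto
    define m where "m = Max (f ` A)"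
    have "m \<in> f ` A" using finA neA unfolding m_def by simp
    then obtain u where uA: "u \<in> A" and fu: "f u = m" by blast
    have umax: "\<forall>y\<in>A. f y \<le> f u" using finA unfolding fu m_def by simp
    define D' where "D' = D - {d. E u d}"
    have "D' \<subset> D" using uA unfolding A_def D'_def by auto
    hence cl': "card D' < card D" using finD by (simp add: psubset_card_mono)
    have DC': "D' \<subseteq> C" using less.prems unfolding D'_def by auto
    from less.hyps[OF cl' DC'] obtain S' where S': "S' \<subseteq> V-C" "\<forall>x\<in>S'. \<forall>y\<in>S'. \<not>E x y"
      "\<forall>w\<in>S'. \<exists>d\<in>D'. E w d" "\<forall>d\<in>D'. \<exists>w\<in>S'. E d w"
      by blast
    have nadj: "\<not> E u w" if w: "w \<in> S'" for w
    proof
      assume uw: "E u w"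
      obtain d' where d': "d' \<in> D'" "E w d'" using S'(3) w by blast
      have nud': "\<not> E u d'" using d' unfolding D'_def by auto
      have sub: "{d\<in>D. E u d} \<subseteq> {d\<in>D. E w d}"
      proof
        fix a assume a: "a \<in> {d\<in>D. E u d}"
        show "a \<in> {d\<in>D. E w d}"
        proof (rule ccontr)
          assume "a \<notin> {d\<in>D. E w d}"
          hence nwa: "\<not> E w a" using a by auto
          have aC: "a \<in> C" "d' \<in> C" using a d' less.prems unfolding D'_def by auto
          have ad: "a \<noteq> d'" using a nud' by auto
          have "E d' a" using cl aC ad unfolding clique_def by auto
          moreover have "u \<in> V - C" "w \<in> V - C" using uA w S'(1) unfolding A_def by auto
          moreover have "u \<noteq> w" using uw irr by auto
          moreover have "\<not> E a w" using nwa sym by auto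
          ultimately have "a \<in> V \<and> u \<in> V \<and> w \<in> V \<and> d' \<in> V \<and> distinct [a,u,w,d'] \<and>
              E a u \<and> E u w \<and> E w d' \<and> E d' a \<and> \<not> E a w \<and> \<not> E u d'"
            using aC ad a uw d' nud' CV sym by auto
          then show False using c4 unfolding C4_free_def by blast
        qed
      qed
      have "d' \<in> {d\<in>D. E w d}" "d' \<notin> {d\<in>D. E u d}" using d' nud' unfolding D'_def by auto
      hence "{d\<in>D. E u d} \<subset> {d\<in>D. E w d}" using sub by auto
      hence "f u < f w" unfolding f_def using finD by (simp add: psubset_card_mono)
      moreover have "w \<in> A" using w S'(1) d' unfolding A_def D'_def by auto
      ultimately show False using umax by fastforce
    qed
    show ?thesis
    proof (rule exI[of _ "insert u S'"], intro conjI)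
      show "insert u S' \<subseteq> V - C" using uA S'(1) unfolding A_def by auto
      show "\<forall>x\<in>insert u S'. \<forall>y\<in>insert u S'. \<not> E x y"
      proof (intro ballI)
        fix x y assume x: "x \<in> insert u S'" and y: "y \<in> insert u S'"
        show "\<not> E x y"
        proof (cases "x = u")
          case True
          then show ?thesis using y nadj irr by auto
        next
          case False
          hence xS: "x \<in> S'" using x by auto
          show ?thesis
          proof (cases "y = u")
            case True
            then show ?thesis using xS nadj sym by metis
          next
            case False
            then show ?thesis using xS y S'(2) by auto
          qed
        qed
      qed
      show "\<forall>w\<in>insert u S'. \<exists>d\<in>D. E w d" using uA S'(3) unfolding A_def D'_def by auto
      show "\<forall>d\<in>D. \<exists>w\<in>insert u S'. E d w" using S'(4) sym unfolding D'_def by auto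
    qed
  qed
qed

theorem mainTheorem9:
  assumes "graph V E" and "C4_free V E" and "clique V E C"
  shows "strong_clique V E C \<longleftrightarrow> simplicial_clique V E C"
proof
  have sym: "\<And>x y. E x y \<Longrightarrow> E y x" and irr: "\<And>x. \<not> E x x"
    and inV: "\<And>x y. E x y \<Longrightarrow> x \<in> V \<and> y \<in> V" using assms(1) by (auto simp: graph_def)
  have CV: "C \<subseteq> V" using assms(3) by (simp add: clique_def)
  assume st: "strong_clique V E C"
  show "simplicial_clique V E C"
  proof (rule ccontr)
    assume ns: "\<not> simplicial_clique V E C"
    have out: "\<forall>v\<in>C. \<exists>u\<in>V-C. E v u"
    proof
      fix v assume v: "v \<in> C"
      have "C \<noteq> closed_nbhd V E v" using ns v CV assms(3) unfolding simplicial_clique_def by auto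
      moreover have "C \<subseteq> closed_nbhd V E v" using assms(3) v unfolding clique_def closed_nbhd_def by auto
      ultimately obtain u where "u \<in> closed_nbhd V E v" "u \<notin> C" by auto
      then show "\<exists>u\<in>V-C. E v u" using v unfolding closed_nbhd_def by auto
    qed
    obtain S where S: "S \<subseteq> V-C" "\<forall>x\<in>S. \<forall>y\<in>S. \<not>E x y" "\<forall>d\<in>C. \<exists>w\<in>S. E d w"
      using dom[OF assms out, of C] by blast
    have "independent V E S" using S unfolding independent_def by auto
    then obtain T where T: "maximal_independent V E T" "S \<subseteq> T" using ext_max[OF assms(1)] by blast
    have "C \<inter> T = {}"
    proof (rule ccontr)
      assume "C \<inter> T \<noteq> {}"
      then obtain c where c: "c \<in> C" "c \<in> T" by auto
      then obtain w where "w \<in> S" "E c w" using S(3) by blast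
      then show False using T c unfolding maximal_independent_def independent_def by auto
    qed
    then show False using st T unfolding strong_clique_def by auto
  qed
next
  have sym: "\<And>x y. E x y \<Longrightarrow> E y x" and irr: "\<And>x. \<not> E x x"
    using assms(1) by (auto simp: graph_def)
  assume "simplicial_clique V E C"
  then obtain v where v: "v \<in> V" "C = closed_nbhd V E v" unfolding simplicial_clique_def by auto
  show "strong_clique V E C" unfolding strong_clique_def
  proof (intro conjI allI impI)
    show "clique V E C" by (rule assms(3))
    fix S assume S: "maximal_independent V E S"
    show "C \<inter> S \<noteq> {}"
    proof
      assume e: "C \<inter> S = {}"
      have SV: "S \<subseteq> V" and Si: "\<forall>x\<in>S. \<forall>y\<in>S. \<not> E x y"
        using S unfolding maximal_independent_def independent_def by auto
      have nv: "\<And>x. x \<in> S \<Longrightarrow> \<not> E v x \<and> x \<noteq> v"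
        using e SV v(2) unfolding closed_nbhd_def by blast
      have "independent V E (insert v S)"
        unfolding independent_def
      proof (intro conjI ballI)
        show "insert v S \<subseteq> V" using SV v(1) by auto
        fix x y assume x: "x \<in> insert v S" and y: "y \<in> insert v S"
        show "\<not> E x y"
          using x y Si nv sym irr by (metis insertE)
      qed
      hence "insert v S = S" using S unfolding maximal_independent_def by auto
      then show False using e v unfolding closed_nbhd_def by auto
    qed
  qed
qed

end
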